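(* Let $G$ be a graph on node set $V=\{1,\dots,n\}$ with symmetric adjacency matrix $A\in\mathbb{R}^{n\times n}$, let $C\subseteq V$ be a set of $m$ coarse nodes, and let $S\in\mathbb{R}^{n\times m}$ be a coarsening matrix whose rows are indexed by $V$ and whose columns are indexed by $C$. Define the coarse graph $G_c$ on node set $C$ by its adjacency matrix $A_c=S^TAS$. For each $j\in C$ let $\chi(j)=\{i\in V: S_{ij}\neq 0\}$ be its aggregation set, and suppose that for every $j\in C$, $\chi(j)$ contains only $j$ itself and direct neighbors of $j$ in $G$. Then, for any $j,j'\in C$, if there is an edge connecting $j$ and $j'$ in $G_c$, the distance between $j$ and $j'$ in $G$ is at most $3$.
   Context: Edges are determined by structural nonzeros: there is an edge between nodes $p,q$ (possibly $p=q$, a self loop) iff the corresponding adjacency entry is structurally nonzero. An entry of $A$ is structurally nonzero iff it is nonzero; an entry $(A_c)_{jj'}=\sum_{i,i'} S_{ij}A_{ii'}S_{i'j'}$ is structurally nonzero if at least one summand $S_{ij}A_{ii'}S_{i'j'}$ is nonzero, even if the summands cancel algebraically. A direct neighbor of $j$ is a node $i\neq j$ with $A_{ij}\neq 0$. The distance between two nodes of $G$ is the number of edges in a shortest path connecting them. *)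

theory Defs
  imports Main "HOL-Library.Extended_Nat"
begin

(* Graph given by an adjacency matrix A on node set V: edge between p and q
   (possibly p = q) iff A p q is (structurally) nonzero. *)

definition is_walk :: "(nat \<Rightarrow> nat \<Rightarrow> real) \<Rightarrow> nat set \<Rightarrow> nat list \<Rightarrow> bool" where
  "is_walk A V p \<longleftrightarrow> p \<noteq> [] \<and> set p \<subseteq> V \<and>
     (\<forall>k. Suc k < length p \<longrightarrow> A (p ! k) (p ! Suc k) \<noteq> 0)"

definition graph_dist :: "(nat \<Rightarrow> nat \<Rightarrow> real) \<Rightarrow> nat set \<Rightarrow> nat \<Rightarrow> nat \<Rightarrow> enat" where
  "graph_dist A V u v =
     (INF p \<in> {p. is_walk A V p \<and> hd p = u \<and> last p = v}. enat (length p - 1))"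

(* Structural edge of the coarse graph A_c = S^T A S between coarse nodes j, j':
   some summand S_ij A_ii' S_i'j' is nonzero. *)
definition coarse_edge :: "(nat \<Rightarrow> nat \<Rightarrow> real) \<Rightarrow> (nat \<Rightarrow> nat \<Rightarrow> real) \<Rightarrow> nat set \<Rightarrow> nat \<Rightarrow> nat \<Rightarrow> bool" where
  "coarse_edge A S V j j' \<longleftrightarrow> (\<exists>i\<in>V. \<exists>i'\<in>V. S i j * A i i' * S i' j' \<noteq> 0)"

definition agg_set :: "(nat \<Rightarrow> nat \<Rightarrow> real) \<Rightarrow> nat set \<Rightarrow> nat \<Rightarrow> nat set" where
  "agg_set S V j = {i \<in> V. S i j \<noteq> 0}"

end

theory Submission
  imports Defs
begin

lemma dist_le_walk:
  assumes "is_walk A V p" "hd p = u" "last p = v" "length p \<le> 4"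
  shows "graph_dist A V u v \<le> 3"
proof -
  have "graph_dist A V u v \<le> enat (length p - 1)"
    unfolding graph_dist_def using assms by (intro INF_lower) auto
  also have "\<dots> \<le> 3" using assms(4) by (simp add: numeral_eq_enat)
  finally show ?thesis .
qed

lemma walk_nth: "(\<forall>k. Suc k < length p \<longrightarrow> P k) \<longleftrightarrow> (\<forall>k < length p - 1. P k)"
  by auto

theorem corollary1:
  fixes n :: nat and A :: "nat \<Rightarrow> nat \<Rightarrow> real" and S :: "nat \<Rightarrow> nat \<Rightarrow> real"
    and C :: "nat set"
  assumes symA: "\<forall>i\<in>{1..n}. \<forall>i'\<in>{1..n}. A i i' = A i' i"
    and CV: "C \<subseteq> {1..n}"
    and agg: "\<forall>j\<in>C. \<forall>i\<in>agg_set S {1..n} j. i = j \<or> (i \<noteq> j \<and> A i j \<noteq> 0)"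
    and jC: "j \<in> C" and j'C: "j' \<in> C"
    and edge: "coarse_edge A S {1..n} j j'"
  shows "graph_dist A {1..n} j j' \<le> 3"
proof -
  obtain i i' where ii: "i \<in> {1..n}" "i' \<in> {1..n}" "S i j \<noteq> 0" "A i i' \<noteq> 0" "S i' j' \<noteq> 0"
    using edge unfolding coarse_edge_def by auto
  have jV: "j \<in> {1..n}" "j' \<in> {1..n}" using jC j'C CV by auto
  have a1: "i = j \<or> A i j \<noteq> 0" using agg jC ii unfolding agg_set_def by auto
  have a2: "i' = j' \<or> A i' j' \<noteq> 0" using agg j'C ii unfolding agg_set_def by auto
  have a1': "i = j \<or> A j i \<noteq> 0" using a1 symA ii jV by metis
  consider "i = j" "i' = j'" | "i = j" "i' \<noteq> j'" | "i \<noteq> j" "i' = j'" | "i \<noteq> j" "i' \<noteq> j'" by blast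
  then show ?thesis
  proof cases
    case 1
    show ?thesis
      by (rule dist_le_walk[where p="[i,i']"]) (use 1 ii in \<open>auto simp: is_walk_def less_Suc_eq\<close>)
  next
    case 2
    show ?thesis
      by (rule dist_le_walk[where p="[i,i',j']"]) (use 2 ii jV a2 in \<open>auto simp: is_walk_def less_Suc_eq nth_Cons'\<close>)
  next
    case 3
    show ?thesis
      by (rule dist_le_walk[where p="[j,i,i']"]) (use 3 ii jV a1' in \<open>auto simp: is_walk_def less_Suc_eq nth_Cons'\<close>)
  next
    case 4
    show ?thesis
      by (rule dist_le_walk[where p="[j,i,i',j']"]) (use 4 ii jV a1' a2 in \<open>auto simp: is_walk_def less_Suc_eq nth_Cons'\<close>)
  qed
qed

end
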